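(* In the setting of the context, if $\|D\|<\min\{r_{\mathbb R}(A),\mu_Z(A)\}$ and there is no real eigenvector $v$ of $(A+D)^\top$ satisfying $v^\top z\le0$ for all $z\in\mathcal Z$, then the malfunctioning network $\dot X=(A+D)X+Bu+Cw_N$ is resiliently stabilizable.
   Context: Network of $N$ linear subsystems $\dot x_i=A_ix_i+\bar B_i\bar u_i+\sum_{k\in\mathcal N_i}D_{i,k}x_k$, $x_i\in\mathbb{R}^{n_i}$, $\bar u_i(t)\in\bar{\mathcal U}_i=[-1,1]^{m_i}$, $\mathcal N_i\subseteq\{1,\dots,N\}\setminus\{i\}$; $n_\Sigma=\sum n_i$, $X=(x_1,\dots,x_N)$, $A=\mathrm{diag}(A_1,\dots,A_N)$, $D=(D_{i,j})$ block matrix with zero diagonal blocks and $D_{i,k}=0$ for $k\notin\mathcal N_i$, $D\ne0$. Subsystem $N$ has lost control of $p_N\in\{1,\dots,m_N\}$ actuators: $\bar B_N$ is split into $B_N\in\mathbb{R}^{n_N\times(m_N-p_N)}$ and $C_N\in\mathbb{R}^{n_N\times p_N}$, $\mathcal U_N=[-1,1]^{m_N-p_N}$, $\mathcal W_N=[-1,1]^{p_N}$. Malfunctioning network: $\dot X=(A+D)X+Bu+Cw_N$ with $B=\mathrm{diag}(\bar B_1,\dots,\bar B_{N-1},B_N)$, $C=\begin{pmatrix}0\\C_N\end{pmatrix}$, $u(t)\in\mathcal U=\bar{\mathcal U}_1\times\cdots\times\bar{\mathcal U}_{N-1}\times\mathcal U_N$, $w_N(t)\in\mathcal W_N$. $\mathcal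 Z:=B\mathcal U\ominus(-C\mathcal W_N)=\{z\in\mathbb{R}^{n_\Sigma}:z-Cw\in B\mathcal U\ \forall w\in\mathcal W_N\}$, $r_\Sigma=\dim\mathcal Z$, and $Z\in\mathbb{R}^{n_\Sigma\times r_\Sigma}$ is a matrix with $\mathrm{Im}(Z)=\mathrm{span}(\mathcal Z)$. $\mu_Z(A):=\min\{\|\Delta A\|:(A+\Delta A,Z)\text{ uncontrollable}\}$; $r_{\mathbb R}(A)=\inf\{\|D'\|:D'\text{ real}, A+D'\text{ has an eigenvalue with positive real part}\}$. A tuple $(M,G,H,\mathcal U,\mathcal W)$ (system $\dot x=Mx+Gu+Hw$) is resiliently stabilizable if for every $x(0)$ and every $w:[0,\infty)\to\mathcal W$ there exist $T\ge0$ and $u:[0,\infty)\to\mathcal U$, with $u(t)$ depending only on $w(t)$, such that the solution exists, is unique and $x(T)=0$. The malfunctioning network is resiliently stabilizable if $(A+D,B,C,\mathcal U,\mathcal W_N)$ is. *)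

theory Defs
  imports "HOL-Analysis.Analysis" "HOL-Library.Extended_Real"
begin

definition mat_norm :: "real^'n^'m \<Rightarrow> real" where
  "mat_norm M = onorm (\<lambda>x. M *v x)"

definition cmat :: "real^'n^'m \<Rightarrow> complex^'n^'m" where
  "cmat M = (\<chi> i j. complex_of_real (M$i$j))"

text \<open>Pair (M, Z) controllable (Kalman rank condition), where the matrix Z is
  given through its column space V = Im Z:
  span of the columns of [Z, MZ, ..., M^(n-1) Z] is the whole space.\<close>
definition kalman_controllable :: "real^'n^'n \<Rightarrow> (real^'n) set \<Rightarrow> bool" where
  "kalman_controllable M V \<longleftrightarrow>
     span (\<Union>k\<in>{..<CARD('n)}. ((\<lambda>x. M *v x) ^^ k) ` V) = UNIV"

text \<open>mu_Z(A) = min { ||Delta A|| : (A + Delta A, Z) uncontrollable } (infimum, +oo if empty),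
  with V = Im Z.\<close>
definition mu_Z :: "real^'n^'n \<Rightarrow> (real^'n) set \<Rightarrow> ereal" where
  "mu_Z A V = Inf {ereal (mat_norm DA) | DA. \<not> kalman_controllable (A + DA) V}"

definition r_R :: "real^'n^'n \<Rightarrow> ereal" where
  "r_R A = Inf {ereal (mat_norm D') | D'.
      \<exists>c::complex. \<exists>v::complex^'n. v \<noteq> 0 \<and> cmat (A + D') *v v = (\<chi> i. c * v$i) \<and> Re c > 0}"

text \<open>Minkowski (Pontryagin) difference  G U \<ominus> (-H W).\<close>
definition minkowski_Z :: "real^'u^'n \<Rightarrow> real^'w^'n \<Rightarrow> (real^'u) set \<Rightarrow> (real^'w) set \<Rightarrow> (real^'n) set" where
  "minkowski_Z G H U W = {z. \<forall>w\<in>W. z - H *v w \<in> (\<lambda>u. G *v u) ` U}"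

text \<open>(Caratheodory) solution of x' = M x + G u(t) + H w(t), x(0) = x0 on [0, oo),
  in integral form.\<close>
definition is_solution ::
  "real^'n^'n \<Rightarrow> real^'u^'n \<Rightarrow> real^'w^'n \<Rightarrow> (real \<Rightarrow> real^'u) \<Rightarrow> (real \<Rightarrow> real^'w)
     \<Rightarrow> real^'n \<Rightarrow> (real \<Rightarrow> real^'n) \<Rightarrow> bool" where
  "is_solution M G H u w x0 x \<longleftrightarrow>
     (\<forall>t\<ge>0. ((\<lambda>s. M *v x s + G *v u s + H *v w s) has_integral (x t - x0)) {0..t})"

text \<open>Resilient stabilizability of (M, G, H, U, W): for every initial state there is a
  control law u(t) = f(t, w(t)) (u(t) depends only on the current value w(t)) such that
  for every undesired input w : [0,oo) -> W the solution exists, is unique and reaches 0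
  at some time T \<ge> 0.\<close>
definition resiliently_stabilizable ::
  "real^'n^'n \<Rightarrow> real^'u^'n \<Rightarrow> real^'w^'n \<Rightarrow> (real^'u) set \<Rightarrow> (real^'w) set \<Rightarrow> bool" where
  "resiliently_stabilizable M G H U W \<longleftrightarrow>
     (\<forall>x0. \<exists>f :: real \<Rightarrow> real^'w \<Rightarrow> real^'u.
        (\<forall>t\<ge>0. \<forall>w\<in>W. f t w \<in> U) \<and>
        (\<forall>w. (\<forall>t\<ge>0. w t \<in> W) \<longrightarrow>
           (\<exists>T\<ge>0. \<exists>x. is_solution M G H (\<lambda>t. f t (w t)) w x0 x
               \<and> (\<forall>y. is_solution M G H (\<lambda>t. f t (w t)) w x0 y \<longrightarrow> (\<forall>t\<ge>0. y t = x t))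
               \<and> x T = 0)))"

end

theory Submission
  imports Defs "Jordan_Normal_Form.Spectral_Radius"
begin

no_notation Matrix.vec_index (infixl "$" 100)
no_notation Matrix.scalar_prod (infix "\<bullet>" 70)
hide_const (open) VectorSpace.subspace


definition mpowv :: "real^'n^'n \<Rightarrow> nat \<Rightarrow> real^'n \<Rightarrow> real^'n" where
  "mpowv M k = ((*v) M ^^ k)"

definition expc :: "real^'n^'n \<Rightarrow> real^'n \<Rightarrow> 'n \<Rightarrow> nat \<Rightarrow> real" where
  "expc M x i n = (mpowv M n x $ i) / fact n"

definition expv :: "real^'n^'n \<Rightarrow> real \<Rightarrow> real^'n \<Rightarrow> real^'n" where
  "expv M t x = (\<chi> i. \<Sum>n. expc M x i n * t ^ n)"

lemma mpowv_Suc: "mpowv M (Suc n) x = M *v mpowv M n x"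
  by (simp add: mpowv_def)

lemma mpowv_0: "mpowv M 0 x = x"
  by (simp add: mpowv_def)

lemma norm_mv: "norm (M *v x) \<le> mat_norm M * norm x"
  unfolding mat_norm_def
  using onorm[OF matrix_vector_mul_bounded_linear[of M]] by simp

lemma mat_norm_nonneg: "0 \<le> mat_norm M"
  unfolding mat_norm_def
  using onorm_pos_le[OF matrix_vector_mul_bounded_linear[of M]] by simp

lemma norm_mpowv: "norm (mpowv M n x) \<le> mat_norm M ^ n * norm x"
proof (induction n)
  case 0 then show ?case by (simp add: mpowv_0)
next
  case (Suc n)
  have "norm (mpowv M (Suc n) x) \<le> mat_norm M * norm (mpowv M n x)"
    by (simp add: mpowv_Suc norm_mv)
  also have "\<dots> \<le> mat_norm M * (mat_norm M ^ n * norm x)"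
    by (rule mult_left_mono[OF Suc mat_norm_nonneg])
  finally show ?case by (simp add: algebra_simps)
qed

lemma expc_summable: "summable (\<lambda>n. expc M x i n * y ^ n)"
proof (rule summable_comparison_test)
  let ?L = "mat_norm M"
  show "summable (\<lambda>n. norm x * (inverse (fact n) * (?L * \<bar>y\<bar>) ^ n))"
    by (intro summable_mult summable_exp)
  show "\<exists>N. \<forall>n\<ge>N. norm (expc M x i n * y ^ n) \<le> norm x * (inverse (fact n) * (?L * \<bar>y\<bar>) ^ n)"
  proof (intro exI allI impI)
    fix n :: nat
    have "\<bar>mpowv M n x $ i\<bar> \<le> ?L ^ n * norm x"
      using component_le_norm_cart[of "mpowv M n x" i] norm_mpowv[of M n x] by linarith
    hence "\<bar>mpowv M n x $ i\<bar> * \<bar>y\<bar> ^ n \<le> ?L ^ n * norm x * \<bar>y\<bar> ^ n"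
      by (rule mult_right_mono) simp
    hence "\<bar>mpowv M n x $ i\<bar> * \<bar>y\<bar> ^ n / fact n \<le> ?L ^ n * norm x * \<bar>y\<bar> ^ n / fact n"
      by (rule divide_right_mono) simp
    moreover have "norm (expc M x i n * y ^ n) = \<bar>mpowv M n x $ i\<bar> * \<bar>y\<bar> ^ n / fact n"
      by (simp add: expc_def abs_mult power_abs)
    moreover have "norm x * (inverse (fact n) * (?L * \<bar>y\<bar>) ^ n) = ?L ^ n * norm x * \<bar>y\<bar> ^ n / fact n"
      by (simp add: power_mult_distrib divide_inverse)
    ultimately show "norm (expc M x i n * y ^ n) \<le> norm x * (inverse (fact n) * (?L * \<bar>y\<bar>) ^ n)"
      by simp
  qed
qed

lemma diffs_expc: "diffs (expc M x i) n = (M *v mpowv M n x) $ i / fact n"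
proof -
  have "diffs (expc M x i) n = of_nat (Suc n) * ((M *v mpowv M n x) $ i / fact (Suc n))"
    by (simp add: diffs_def expc_def mpowv_Suc)
  also have "\<dots> = (M *v mpowv M n x) $ i / fact n"
    by (simp add: fact_Suc)
  finally show ?thesis .
qed

lemma vec_as_sum: "(\<chi> i. f i) = (\<Sum>j\<in>UNIV. f j *\<^sub>R (axis j 1 :: real^'n))"
  using basis_expansion[of "\<chi> i. f i"] by (simp add: scalar_mult_eq_scaleR)

lemma expv_deriv:
  fixes M :: "real^'n^'n"
  shows "((\<lambda>t. expv M t x) has_vector_derivative (M *v expv M t x)) (at t within S)"
proof -
  have d: "((\<lambda>t. \<Sum>n. expc M x j n * t ^ n) has_real_derivative (\<Sum>n. diffs (expc M x j) n * t ^ n)) (at t within S)" for j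
    using termdiffs_strong_converges_everywhere[OF expc_summable, of M x j t]
    by (rule DERIV_subset) simp
  have e: "(\<Sum>n. diffs (expc M x j) n * t ^ n) = (M *v expv M t x) $ j" for j
  proof -
    have "diffs (expc M x j) n * t ^ n = (\<Sum>l\<in>UNIV. M $ j $ l * (expc M x l n * t ^ n))" for n
    proof -
      have "diffs (expc M x j) n * t ^ n = (\<Sum>l\<in>UNIV. M $ j $ l * mpowv M n x $ l) / fact n * t ^ n"
        by (simp add: diffs_expc matrix_vector_mult_def)
      also have "\<dots> = (\<Sum>l\<in>UNIV. M $ j $ l * (mpowv M n x $ l / fact n * t ^ n))"
        by (simp add: sum_divide_distrib sum_distrib_right mult.assoc)
      finally show ?thesis by (simp add: expc_def)
    qed
    hence "(\<Sum>n. diffs (expc M x j) n * t ^ n) = (\<Sum>n. \<Sum>l\<in>UNIV. M $ j $ l * (expc M x l n * t ^ n))"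
      by simp
    also have "\<dots> = (\<Sum>l\<in>UNIV. \<Sum>n. M $ j $ l * (expc M x l n * t ^ n))"
      by (rule suminf_sum) (intro summable_mult expc_summable)
    also have "\<dots> = (\<Sum>l\<in>UNIV. M $ j $ l * (\<Sum>n. expc M x l n * t ^ n))"
      by (simp add: suminf_mult expc_summable)
    finally show ?thesis by (simp add: expv_def matrix_vector_mult_def)
  qed
  have "((\<lambda>t. \<Sum>j\<in>UNIV. (\<Sum>n. expc M x j n * t ^ n) *\<^sub>R (axis j 1 :: real^'n)) has_vector_derivative
        (\<Sum>j\<in>UNIV. (\<Sum>n. diffs (expc M x j) n * t ^ n) *\<^sub>R axis j 1)) (at t within S)"
    apply (rule has_vector_derivative_sum)
    using has_vector_derivative_scaleR[OF d has_vector_derivative_const] by simp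
  also have "(\<Sum>j\<in>UNIV. (\<Sum>n. diffs (expc M x j) n * t ^ n) *\<^sub>R (axis j 1 :: real^'n)) = M *v expv M t x"
    by (simp add: e vec_as_sum[symmetric])
  finally show ?thesis by (simp add: expv_def vec_as_sum[symmetric])
qed

lemma expv_0: "expv M 0 x = x"
proof -
  have "(\<Sum>n. expc M x i n * 0 ^ n) = x $ i" for i
    using powser_zero[of "expc M x i"] by (simp add: expc_def mpowv_0)
  thus ?thesis by (simp add: expv_def vec_eq_iff)
qed



lemma mv_neg: "(-M) *v x = - (M *v (x::real^'n))"
  using matrix_vector_mult_diff_rdistrib[of 0 M x] by simp

lemma inner_mv_le: "y \<bullet> (M *v y) \<le> mat_norm M * (y \<bullet> y)"
proof -
  have "y \<bullet> (M *v y) \<le> norm y * norm (M *v y)" by (rule norm_cauchy_schwarz)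
  also have "\<dots> \<le> norm y * (mat_norm M * norm y)" by (rule mult_left_mono[OF norm_mv]) simp
  also have "\<dots> = mat_norm M * (y \<bullet> y)" by (simp add: dot_square_norm power2_eq_square)
  finally show ?thesis .
qed

lemma unique_fwd:
  fixes M :: "real^'n^'n" and y :: "real \<Rightarrow> real^'n"
  assumes T: "0 \<le> T"
    and d: "\<And>t. t \<in> {0..T} \<Longrightarrow> (y has_vector_derivative (M *v y t)) (at t within {0..T})"
    and y0: "y 0 = 0"
  shows "y T = 0"
proof -
  define L where "L = mat_norm M"
  define g where "g t = exp (-(2*L) * t) * (y t \<bullet> y t)" for t
  define g' where "g' t = exp (-(2*L) * t) * (y t \<bullet> (M *v y t) + (M *v y t) \<bullet> y t) + (-(2*L)) * exp (-(2*L) * t) * (y t \<bullet> y t)" for t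
  have dg: "(g has_real_derivative g' t) (at t within {0..T})" if "t \<in> {0..T}" for t
  proof -
    have "((\<lambda>t. y t \<bullet> y t) has_vector_derivative (y t \<bullet> (M *v y t) + (M *v y t) \<bullet> y t)) (at t within {0..T})"
      using bounded_bilinear.has_vector_derivative[OF bounded_bilinear_inner d[OF that] d[OF that]] .
    hence i: "((\<lambda>t. y t \<bullet> y t) has_real_derivative (y t \<bullet> (M *v y t) + (M *v y t) \<bullet> y t)) (at t within {0..T})"
      by (simp add: has_real_derivative_iff_has_vector_derivative)
    have e: "((\<lambda>t. exp (-(2*L) * t)) has_real_derivative (-(2*L)) * exp (-(2*L) * t)) (at t within {0..T})"
      by (auto intro!: derivative_eq_intros)
    show ?thesis unfolding g_def g'_def
      using DERIV_mult[OF e i] by (simp add: algebra_simps)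
  qed
  have g'le: "g' t \<le> 0" for t
  proof -
    have "y t \<bullet> (M *v y t) \<le> L * (y t \<bullet> y t)" unfolding L_def by (rule inner_mv_le)
    hence "exp (-(2*L) * t) * (y t \<bullet> (M *v y t)) \<le> exp (-(2*L) * t) * (L * (y t \<bullet> y t))"
      by (rule mult_left_mono) simp
    thus ?thesis unfolding g'_def by (simp add: inner_commute algebra_simps)
  qed
  have cont: "continuous_on {0..T} g"
    by (rule DERIV_continuous_on[OF dg])
  have "g T \<le> g 0"
  proof (rule DERIV_nonpos_imp_decreasing_open[OF T _ cont])
    fix x assume "0 < x" "x < T"
    hence "(g has_real_derivative g' x) (at x)"
      using dg[of x] at_within_Icc_at[of 0 x T] by auto
    thus "\<exists>y. (g has_real_derivative y) (at x) \<and> y \<le> 0" using g'le by blast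
  qed
  hence "y T \<bullet> y T \<le> 0" using y0 by (simp add: g_def mult_le_0_iff)
  thus ?thesis by (metis antisym inner_ge_zero inner_eq_zero_iff)
qed

lemma unique_all:
  fixes M :: "real^'n^'n" and y :: "real \<Rightarrow> real^'n"
  assumes d: "\<And>t. (y has_vector_derivative (M *v y t)) (at t)"
    and y0: "y 0 = 0"
  shows "y t = 0"
proof (cases "0 \<le> t")
  case True
  show ?thesis
    by (rule unique_fwd[where T=t and M=M and y=y, OF True _ y0]) (rule has_vector_derivative_at_within[OF d])
next
  case False
  define z where "z = (\<lambda>s. y (- s))"
  have dz: "(z has_vector_derivative ((-M) *v z s)) (at s)" for s
  proof -
    have "((y \<circ> uminus) has_vector_derivative ((-1) *\<^sub>R (M *v y (- s)))) (at s)"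
      by (rule vector_diff_chain_at) (auto intro!: derivative_eq_intros d)
    thus ?thesis by (simp add: z_def o_def mv_neg)
  qed
  have "z (-t) = 0"
  proof (rule unique_fwd[where T="-t" and M="-M" and y=z])
    show "0 \<le> -t" using False by simp
    show "z 0 = 0" using y0 by (simp add: z_def)
  qed (rule has_vector_derivative_at_within[OF dz])
  thus ?thesis by (simp add: z_def)
qed

lemma unique_eq:
  fixes M :: "real^'n^'n" and ya yb :: "real \<Rightarrow> real^'n"
  assumes "\<And>t. (ya has_vector_derivative (M *v ya t)) (at t)"
    "\<And>t. (yb has_vector_derivative (M *v yb t)) (at t)" "ya 0 = yb 0"
  shows "ya t = yb t"
proof -
  have "(\<lambda>t. ya t - yb t) t = 0"
    by (rule unique_all[where M=M]) (use assms in \<open>auto intro!: derivative_eq_intros simp: algebra_simps\<close>)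
  thus ?thesis by simp
qed

lemma expv_deriv_at:
  fixes M :: "real^'n^'n"
  shows "((\<lambda>t. expv M t x) has_vector_derivative (M *v expv M t x)) (at t)"
  using expv_deriv[of M x t UNIV] by simp

lemma expv_add: "expv M t (x + y) = expv M t x + expv M t y"
  by (rule unique_eq[where M=M]) (auto intro!: derivative_eq_intros expv_deriv_at simp: expv_0 algebra_simps)

lemma expv_scale: "expv M t (c *\<^sub>R x) = c *\<^sub>R expv M t x"
  by (rule unique_eq[where M=M]) (auto intro!: derivative_eq_intros expv_deriv_at simp: expv_0 algebra_simps)

lemma expv_linear: "linear (expv M t)"
  by (rule linearI) (simp_all add: expv_add expv_scale)

lemma expv_M: "expv M t (M *v x) = M *v expv M t x"
proof (rule unique_eq[where M=M])
  show "((\<lambda>t. M *v expv M t x) has_vector_derivative M *v (M *v expv M t x)) (at t)" for t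
    using bounded_linear.has_vector_derivative[OF matrix_vector_mul_bounded_linear expv_deriv_at] .
qed (auto intro!: expv_deriv_at simp: expv_0)

lemma expv_add_time: "expv M (s + t) x = expv M s (expv M t x)"
proof -
  have "(\<lambda>s. expv M (s + t) x) s = (\<lambda>s. expv M s (expv M t x)) s"
  proof (rule unique_eq[where M=M and ya="\<lambda>s. expv M (s + t) x" and yb="\<lambda>s. expv M s (expv M t x)"])
    show "((\<lambda>s. expv M (s + t) x) has_vector_derivative M *v expv M (s + t) x) (at s)" for s
    proof -
      have "(((\<lambda>s. expv M s x) \<circ> (\<lambda>s. s + t)) has_vector_derivative 1 *\<^sub>R (M *v expv M (s + t) x)) (at s)"
        by (rule vector_diff_chain_at) (auto intro!: derivative_eq_intros expv_deriv_at)
      thus ?thesis by (simp add: o_def)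
    qed
  qed (auto intro!: expv_deriv_at simp: expv_0)
  thus ?thesis by simp
qed

lemma expv_inv: "expv M (-t) (expv M t x) = x"
  using expv_add_time[of M "-t" t x] by (simp add: expv_0)

lemma expv_inv': "expv M t (expv M (-t) x) = x"
  using expv_add_time[of M t "-t" x] by (simp add: expv_0)

lemma expv_basis: "expv M t v = (\<Sum>j\<in>UNIV. (v $ j) *\<^sub>R expv M t (axis j 1))"
proof -
  have "expv M t v = expv M t (\<Sum>j\<in>UNIV. (v $ j) *\<^sub>R axis j 1)"
    using basis_expansion[of v] by (simp add: scalar_mult_eq_scaleR)
  also have "\<dots> = (\<Sum>j\<in>UNIV. (v $ j) *\<^sub>R expv M t (axis j 1))"
    by (simp add: linear_sum[OF expv_linear] expv_scale)
  finally show ?thesis .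
qed

lemma mv_sum: "M *v (\<Sum>j\<in>S. f j) = (\<Sum>j\<in>S. M *v f j)"
  by (induction S rule: infinite_finite_induct) (auto simp: matrix_vector_right_distrib)

lemma expv_comp_deriv:
  fixes M :: "real^'n^'n"
  assumes a: "(a has_vector_derivative a') (at t within S)"
  shows "((\<lambda>t. expv M t (a t)) has_vector_derivative (M *v expv M t (a t) + expv M t a')) (at t within S)"
proof -
  have aj: "((\<lambda>t. a t $ j) has_real_derivative (a' $ j)) (at t within S)" for j
    using bounded_linear.has_vector_derivative[OF bounded_linear_vec_nth a]
    by (simp add: has_real_derivative_iff_has_vector_derivative)
  have "((\<lambda>t. \<Sum>j\<in>UNIV. (a t $ j) *\<^sub>R expv M t (axis j 1)) has_vector_derivative
     (\<Sum>j\<in>UNIV. (a t $ j) *\<^sub>R (M *v expv M t (axis j 1)) + (a' $ j) *\<^sub>R expv M t (axis j 1))) (at t within S)"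
    by (intro has_vector_derivative_sum has_vector_derivative_scaleR aj expv_deriv)
  also have "(\<Sum>j\<in>UNIV. (a t $ j) *\<^sub>R (M *v expv M t (axis j 1)) + (a' $ j) *\<^sub>R expv M t (axis j 1))
      = M *v expv M t (a t) + expv M t a'"
    by (simp add: sum.distrib expv_basis[of M t "a t"] expv_basis[of M t a'] mv_sum matrix_vector_mult_scaleR)
  finally show ?thesis by (simp add: expv_basis[symmetric])
qed

lemma expv_cont_t: "continuous_on S (\<lambda>t. expv M t x)"
  by (rule continuous_on_vector_derivative) (rule expv_deriv)

lemma expv_cont_comp:
  assumes "continuous_on S f" "continuous_on S a"
  shows "continuous_on S (\<lambda>s. expv M (f s) (a s))"
proof -
  have "continuous_on S (\<lambda>s. \<Sum>j\<in>UNIV. (a s $ j) *\<^sub>R expv M (f s) (axis j 1))"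
    by (intro continuous_intros continuous_on_compose2[OF expv_cont_t[of UNIV] assms(1)] assms(2)) auto
  thus ?thesis by (simp add: expv_basis[symmetric])
qed




definition mpow :: "'a::semiring_1^'n^'n \<Rightarrow> nat \<Rightarrow> 'a^'n^'n" where
  "mpow X k = ((\<lambda>Y. Y ** X) ^^ k) (Finite_Cartesian_Product.mat 1)"

lemma mpow_0: "mpow X 0 = Finite_Cartesian_Product.mat 1"
  by (simp add: mpow_def)

lemma mpow_Suc: "mpow X (Suc k) = mpow X k ** X"
  by (simp add: mpow_def)

lemma mpow_mpowv: "mpow X k *v x = mpowv X k x"
proof (induction k arbitrary: x)
  case 0 then show ?case by (simp add: mpow_0 mpowv_0)
next
  case (Suc k)
  have "mpow X (Suc k) *v x = mpow X k *v (X *v x)"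
    by (simp add: mpow_Suc matrix_vector_mul_assoc)
  also have "\<dots> = mpowv X k (X *v x)" by (rule Suc)
  also have "\<dots> = mpowv X (Suc k) x" by (simp add: mpowv_def funpow_swap1)
  finally show ?case .
qed

lemma cmat_mult: "cmat (X ** Y) = cmat X ** cmat Y"
  by (simp add: cmat_def matrix_matrix_mult_def Finite_Cartesian_Product.vec_eq_iff)

lemma cmat_one: "cmat (Finite_Cartesian_Product.mat 1) = Finite_Cartesian_Product.mat 1"
  by (auto simp: cmat_def Finite_Cartesian_Product.vec_eq_iff fun_eq_iff Finite_Cartesian_Product.mat_def)

lemma cmat_mpow: "cmat (mpow X k) = mpow (cmat X) k"
  by (induction k) (simp_all add: mpow_0 mpow_Suc cmat_mult cmat_one)

lemma scaleR_mmult: "(c *\<^sub>R X) ** (Y::real^'n^'n) = c *\<^sub>R (X ** Y)"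
proof -
  have "((c *\<^sub>R X) ** Y) $ i $ j = (c *\<^sub>R (X ** Y)) $ i $ j" for i j
    by (simp add: matrix_matrix_mult_def sum_distrib_left mult.assoc)
  thus ?thesis by (intro Finite_Cartesian_Product.vec_eq_iff[THEN iffD2] allI) simp
qed

lemma mmult_scaleR: "(Y::real^'n^'n) ** (c *\<^sub>R X) = c *\<^sub>R (Y ** X)"
proof -
  have "(Y ** (c *\<^sub>R X)) $ i $ j = (c *\<^sub>R (Y ** X)) $ i $ j" for i j
    by (simp add: matrix_matrix_mult_def sum_distrib_left mult.left_commute)
  thus ?thesis by (intro Finite_Cartesian_Product.vec_eq_iff[THEN iffD2] allI) simp
qed

lemma mpow_scaleR: "mpow (c *\<^sub>R (X::real^'n^'n)) k = c ^ k *\<^sub>R mpow X k"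
  by (induction k) (simp_all add: mpow_0 mpow_Suc scaleR_mmult mmult_scaleR)

definition tomat :: "(nat \<Rightarrow> 'n::finite) \<Rightarrow> complex^'n^'n \<Rightarrow> complex mat" where
  "tomat p X = Matrix.mat CARD('n) CARD('n) (\<lambda>(i,j). X $ p i $ p j)"

lemma tomat_carrier: "tomat (p::nat \<Rightarrow> 'n::finite) X \<in> carrier_mat CARD('n) CARD('n)"
  by (simp add: tomat_def)

lemma dim_tomat[simp]: "dim_row (tomat (p::nat \<Rightarrow> 'n::finite) X) = CARD('n)" "dim_col (tomat (p::nat \<Rightarrow> 'n::finite) X) = CARD('n)"
  by (simp_all add: tomat_def)

lemma tomat_mult:
  assumes p: "bij_betw p {0..<CARD('n)} (UNIV::'n::finite set)"
  shows "tomat p (X ** Y) = tomat p X * tomat p Y"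
proof (rule eq_matI)
  fix i j assume ij: "i < dim_row (tomat p X * tomat p Y)" "j < dim_col (tomat p X * tomat p Y)"
  hence i: "i < CARD('n)" and j: "j < CARD('n)" by (simp_all add: tomat_def)
  have "(tomat p X * tomat p Y) $$ (i, j) = (\<Sum>l\<in>{0..<CARD('n)}. X $ p i $ p l * Y $ p l $ p j)"
    using i j by (simp add: tomat_def scalar_prod_def)
  also have "\<dots> = (\<Sum>l\<in>UNIV. X $ p i $ l * Y $ l $ p j)"
    by (rule sum.reindex_bij_betw[OF p])
  also have "\<dots> = tomat p (X ** Y) $$ (i, j)"
    using i j by (simp add: tomat_def matrix_matrix_mult_def)
  finally show "tomat p (X ** Y) $$ (i, j) = (tomat p X * tomat p Y) $$ (i, j)" by simp
qed (simp_all add: tomat_def)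

lemma tomat_one:
  assumes p: "bij_betw p {0..<CARD('n)} (UNIV::'n::finite set)"
  shows "tomat p (Finite_Cartesian_Product.mat 1) = 1\<^sub>m CARD('n)"
proof (rule eq_matI)
  fix i j assume "i < dim_row (1\<^sub>m CARD('n) :: complex mat)" "j < dim_col (1\<^sub>m CARD('n) :: complex mat)"
  hence i: "i < CARD('n)" and j: "j < CARD('n)" by simp_all
  have "p i = p j \<longleftrightarrow> i = j"
    using p i j unfolding bij_betw_def inj_on_def by auto
  thus "tomat p (Finite_Cartesian_Product.mat 1) $$ (i, j) = 1\<^sub>m CARD('n) $$ (i, j)"
    using i j by (simp add: tomat_def Finite_Cartesian_Product.mat_def)
qed (simp_all add: tomat_def)

lemma tomat_pow:
  assumes p: "bij_betw p {0..<CARD('n)} (UNIV::'n::finite set)"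
  shows "tomat p (mpow X k) = tomat p X ^\<^sub>m k"
proof (induction k)
  case 0 then show ?case by (simp add: mpow_0 tomat_one[OF p])
next
  case (Suc k) then show ?case by (simp add: mpow_Suc tomat_mult[OF p])
qed

lemma tomat_eigen:
  assumes p: "bij_betw p {0..<CARD('n)} (UNIV::'n::finite set)"
    and ev: "eigenvalue (tomat p X) mu"
  shows "\<exists>u::complex^'n. u \<noteq> 0 \<and> X *v u = (\<chi> i. mu * u $ i)"
proof -
  define q where "q = inv_into {0..<CARD('n)} p"
  have qp: "q (p l) = l" if "l < CARD('n)" for l
    using p that unfolding q_def bij_betw_def by (simp add: inv_into_f_f)
  have pq: "p (q i) = i" for i
    using p unfolding q_def bij_betw_def by (simp add: f_inv_into_f)
  have qlt: "q i < CARD('n)" for i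
    using p unfolding q_def bij_betw_def by (metis atLeastLessThan_iff inv_into_into UNIV_I)
  from ev obtain v where v: "eigenvector (tomat p X) v mu" unfolding eigenvalue_def by auto
  hence vc: "v \<in> carrier_vec CARD('n)" and vnz: "v \<noteq> 0\<^sub>v CARD('n)"
    and vev: "tomat p X *\<^sub>v v = mu \<cdot>\<^sub>v v"
    unfolding eigenvector_def by (auto simp: tomat_def)
  define u :: "complex^'n" where "u = (\<chi> i. vec_index v (q i))"
  have "u \<noteq> 0"
  proof
    assume u0: "u = 0"
    have "v = 0\<^sub>v CARD('n)"
    proof (rule eq_vecI)
      fix l assume "l < dim_vec (0\<^sub>v CARD('n) :: complex vec)"
      hence l: "l < CARD('n)" by simp
      have "u $ p l = 0" using u0 by simp
      thus "vec_index v l = vec_index (0\<^sub>v CARD('n)) l" using l qp[OF l] by (simp add: u_def)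
    qed (use vc in simp)
    with vnz show False by simp
  qed
  moreover have "X *v u = (\<chi> i. mu * u $ i)"
  proof (subst Finite_Cartesian_Product.vec_eq_iff, rule allI)
    fix i
    have "(X *v u) $ i = (\<Sum>j\<in>UNIV. X $ i $ j * u $ j)" by (simp add: matrix_vector_mult_def)
    also have "\<dots> = (\<Sum>l\<in>{0..<CARD('n)}. X $ i $ p l * u $ p l)"
      by (rule sum.reindex_bij_betw[OF p, symmetric])
    also have "\<dots> = (\<Sum>l\<in>{0..<CARD('n)}. X $ p (q i) $ p l * vec_index v l)"
      by (rule sum.cong) (simp_all add: u_def qp pq)
    also have "\<dots> = vec_index (tomat p X *\<^sub>v v) (q i)"
      using qlt[of i] vc by (simp add: tomat_def scalar_prod_def)
    also have "\<dots> = mu * u $ i"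
      using qlt[of i] vc vev by (simp add: u_def)
    finally show "(X *v u) $ i = (\<chi> i. mu * u $ i) $ i" by simp
  qed
  ultimately show ?thesis by blast
qed



lemma eig_bound:
  fixes M :: "real^'n^'n" and u :: "complex^'n"
  assumes u: "u \<noteq> 0" and ev: "cmat M *v u = (\<chi> i. lam * u $ i)"
  shows "cmod lam \<le> (\<Sum>i\<in>UNIV. \<Sum>j\<in>UNIV. \<bar>M$i$j\<bar>)"
proof -
  define m where "m = Max (range (\<lambda>i. cmod (u $ i)))"
  have fin: "finite (range (\<lambda>i. cmod (u $ i)))" by simp
  have "m \<in> range (\<lambda>i. cmod (u $ i))" unfolding m_def by (rule Max_in[OF fin]) simp
  then obtain i0 where i0: "m = cmod (u $ i0)" by auto
  have le: "cmod (u $ i) \<le> cmod (u $ i0)" for i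
  proof -
    have "cmod (u $ i) \<le> m" unfolding m_def by (rule Max_ge[OF fin]) simp
    thus ?thesis using i0 by simp
  qed
  from u obtain i1 where "u $ i1 \<noteq> 0" by (auto simp: Finite_Cartesian_Product.vec_eq_iff)
  hence pos: "cmod (u $ i0) > 0" using le[of i1] by (meson norm_le_zero_iff not_le order_trans)
  have "cmod lam * cmod (u $ i0) = cmod ((cmat M *v u) $ i0)"
    by (simp add: ev norm_mult)
  also have "\<dots> = cmod (\<Sum>j\<in>UNIV. complex_of_real (M $ i0 $ j) * u $ j)"
    by (simp add: matrix_vector_mult_def cmat_def)
  also have "\<dots> \<le> (\<Sum>j\<in>UNIV. cmod (complex_of_real (M $ i0 $ j) * u $ j))"
    by (rule norm_sum)
  also have "\<dots> \<le> (\<Sum>j\<in>UNIV. \<bar>M $ i0 $ j\<bar> * cmod (u $ i0))"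
    by (rule sum_mono) (simp add: norm_mult mult_left_mono le)
  also have "\<dots> = (\<Sum>j\<in>UNIV. \<bar>M $ i0 $ j\<bar>) * cmod (u $ i0)"
    by (simp add: sum_distrib_right)
  finally have "cmod lam \<le> (\<Sum>j\<in>UNIV. \<bar>M $ i0 $ j\<bar>)"
    using pos by simp
  also have "\<dots> \<le> (\<Sum>i\<in>UNIV. \<Sum>j\<in>UNIV. \<bar>M$i$j\<bar>)"
    by (rule member_le_sum) (auto intro: sum_nonneg)
  finally show ?thesis .
qed

lemma cmod_one_plus:
  fixes lam :: complex
  assumes h: "h > 0" and re: "Re lam \<le> -s" and nm: "cmod lam \<le> K" and hK: "h * K^2 = s"
  shows "(cmod (1 + complex_of_real h * lam))^2 \<le> 1 - h * s"
proof -
  have "(cmod (1 + complex_of_real h * lam))^2 = (1 + h * Re lam)^2 + (h * Im lam)^2"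
    by (simp add: cmod_power2)
  also have "\<dots> = 1 + 2 * h * Re lam + h^2 * ((Re lam)^2 + (Im lam)^2)"
    by (simp add: power2_eq_square algebra_simps)
  also have "\<dots> = 1 + 2 * h * Re lam + h^2 * (cmod lam)^2"
    by (simp add: cmod_power2)
  also have "\<dots> \<le> 1 + 2 * h * (-s) + h^2 * K^2"
  proof -
    have "2 * h * Re lam \<le> 2 * h * (-s)" using mult_left_mono[OF re, of "2*h"] h by simp
    moreover have "h^2 * (cmod lam)^2 \<le> h^2 * K^2"
      using nm by (intro mult_left_mono power_mono) auto
    ultimately show ?thesis by linarith
  qed
  also have "\<dots> = 1 - h * s" using hK by (simp add: power2_eq_square algebra_simps)
  finally show ?thesis .
qed

lemma spectral_decay:
  fixes M :: "real^'n^'n"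
  assumes s: "s > 0"
    and eig: "\<And>lam u. u \<noteq> (0::complex^'n) \<Longrightarrow> cmat M *v u = (\<chi> i. lam * u $ i) \<Longrightarrow> Re lam \<le> -s"
  shows "\<exists>h>0. \<exists>c r. 0 < r \<and> r < 1 \<and>
           (\<forall>k x. norm (mpowv (Finite_Cartesian_Product.mat 1 + h *\<^sub>R M) k x) \<le> c * r^k * norm x)"
proof -
  define K1 where "K1 = (\<Sum>i\<in>UNIV. \<Sum>j\<in>UNIV. \<bar>M$i$j\<bar>)"
  have K1: "K1 \<ge> 0" unfolding K1_def by (intro sum_nonneg) auto
  define K0 where "K0 = K1 + s + 1"
  have K0: "K0 > 0" "K0 > s" using K1 s by (auto simp: K0_def)
  define h where "h = s / K0^2"
  have h: "h > 0" using s K0 by (simp add: h_def)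
  have hK: "h * K0^2 = s" using K0 by (simp add: h_def)
  define r0 where "r0 = sqrt (1 - h * s)"
  have hs: "h * s < 1"
  proof -
    have "s^2 < K0^2" using K0 s by (intro power_strict_mono) auto
    thus ?thesis using K0 by (simp add: h_def power2_eq_square divide_simps)
  qed
  have hs0: "h * s > 0" using h s by simp
  have r0: "0 \<le> r0" "r0 < 1" using hs hs0 by (auto simp: r0_def real_sqrt_lt_1_iff)
  define r where "r = (1 + r0) / 2"
  have r: "0 < r" "r < 1" "r0 < r" using r0 by (auto simp: r_def)
  define E where "E = Finite_Cartesian_Product.mat 1 + h *\<^sub>R M"
  define Y where "Y = cmat ((1 / r) *\<^sub>R E)"
  have Yu: "complex_of_real r * (Y *v u) $ i = u $ i + complex_of_real h * (cmat M *v u) $ i" for u i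
  proof -
    have tm: "complex_of_real r * (complex_of_real ((1/r) * ((if i = j then 1 else 0) + h * M $ i $ j)) * u $ j)
        = (if i = j then u $ j else 0) + complex_of_real h * (complex_of_real (M $ i $ j) * u $ j)" for j
      using r by (cases "i = j") (simp_all add: field_simps)
    have "complex_of_real r * (Y *v u) $ i = (\<Sum>j\<in>UNIV. complex_of_real r * (complex_of_real ((1/r) * ((if i = j then 1 else 0) + h * M $ i $ j)) * u $ j))"
      by (simp add: Y_def E_def cmat_def matrix_vector_mult_def Finite_Cartesian_Product.mat_def sum_distrib_left)
    also have "\<dots> = (\<Sum>j\<in>UNIV. (if i = j then u $ j else 0) + complex_of_real h * (complex_of_real (M $ i $ j) * u $ j))"
      by (simp only: tm)
    also have "\<dots> = u $ i + complex_of_real h * (cmat M *v u) $ i"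
      by (simp add: sum.distrib sum_distrib_left cmat_def matrix_vector_mult_def)
    finally show ?thesis .
  qed
  have eigY: "cmod mu < 1" if u: "u \<noteq> 0" and ev: "Y *v u = (\<chi> i. mu * u $ i)" for u mu
  proof -
    define lam where "lam = (complex_of_real r * mu - 1) / complex_of_real h"
    have "cmat M *v u = (\<chi> i. lam * u $ i)"
    proof (subst Finite_Cartesian_Product.vec_eq_iff, rule allI)
      fix i
      have "complex_of_real r * (mu * u $ i) = u $ i + complex_of_real h * (cmat M *v u) $ i"
        using Yu[of u i] ev by (simp add: Finite_Cartesian_Product.vec_eq_iff)
      hence "complex_of_real h * (cmat M *v u) $ i = complex_of_real r * mu * u $ i - u $ i"
        by (simp add: algebra_simps)
      thus "(cmat M *v u) $ i = (\<chi> i. lam * u $ i) $ i"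
        using h by (simp add: lam_def field_simps)
    qed
    hence re: "Re lam \<le> -s" and nm: "cmod lam \<le> K1"
      using eig[OF u] eig_bound[OF u] by (auto simp: K1_def)
    have "1 + complex_of_real h * lam = complex_of_real r * mu"
      using h by (simp add: lam_def)
    hence "(cmod (complex_of_real r * mu))^2 \<le> 1 - h * s"
      using cmod_one_plus[OF h re _ hK] nm K0_def K1 s by fastforce
    hence "cmod (complex_of_real r * mu) \<le> r0"
      unfolding r0_def by (simp add: real_le_rsqrt)
    hence "r * cmod mu \<le> r0" using r by (simp add: norm_mult)
    hence "r * cmod mu < r * 1" using r by linarith
    thus ?thesis using r mult_less_cancel_left_pos by blast
  qed
  obtain p where p: "bij_betw p {0..<CARD('n)} (UNIV::'n set)"
    using ex_bij_betw_nat_finite[of "UNIV::'n set"] by auto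
  define F where "F = tomat p Y"
  have Fc: "F \<in> carrier_mat CARD('n) CARD('n)" unfolding F_def by (rule tomat_carrier)
  have sr: "spectral_radius F < 1"
  proof -
    have fin: "finite (norm ` spectrum F)" using card_finite_spectrum(1)[OF Fc] by simp
    have ne: "norm ` spectrum F \<noteq> {}" using spectrum_non_empty[OF Fc] by simp
    have "\<forall>a\<in>norm ` spectrum F. a < 1"
    proof
      fix a assume "a \<in> norm ` spectrum F"
      then obtain mu where a: "a = norm mu" and mu: "eigenvalue F mu" by (auto simp: spectrum_def)
      from tomat_eigen[OF p mu[unfolded F_def]] obtain u where "u \<noteq> 0" "Y *v u = (\<chi> i. mu * u $ i)" by auto
      from eigY[OF this] show "a < 1" using a by simp
    qed
    thus ?thesis unfolding spectral_radius_def using Max_less_iff[OF fin ne] by blast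
  qed
  obtain as where cp: "char_poly F = (\<Prod>a\<leftarrow>as. [:- a, 1:])"
    using char_poly_factorized[OF Fc] by auto
  have jnf: "\<exists>n_as. jordan_nf F n_as" by (rule jordan_nf_exists[OF Fc cp])
  obtain c where c: "\<And>k. norm_bound (F ^\<^sub>m k) c"
    using spectral_radius_jnf_norm_bound_less_1[OF Fc sr jnf] by auto
  have entry: "\<bar>mpow E k $ i $ j\<bar> \<le> c * r^k" for k i j
  proof -
    define q where "q = inv_into {0..<CARD('n)} p"
    have pq: "p (q i) = i" for i
      using p unfolding q_def bij_betw_def by (simp add: f_inv_into_f)
    have qlt: "q i < CARD('n)" for i
      using p unfolding q_def bij_betw_def by (metis atLeastLessThan_iff inv_into_into UNIV_I)
    have "norm ((F ^\<^sub>m k) $$ (q i, q j)) \<le> c"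
      using c[of k] qlt[of i] qlt[of j] Fc unfolding norm_bound_def by auto
    moreover have "(F ^\<^sub>m k) $$ (q i, q j) = mpow Y k $ i $ j"
    proof -
      have "F ^\<^sub>m k = tomat p (mpow Y k)" by (simp add: F_def tomat_pow[OF p])
      thus ?thesis using qlt[of i] qlt[of j] by (simp add: tomat_def pq)
    qed
    moreover have "mpow Y k $ i $ j = complex_of_real ((1/r)^k * mpow E k $ i $ j)"
    proof -
      have "mpow Y k = cmat (mpow ((1/r) *\<^sub>R E) k)" by (simp only: Y_def cmat_mpow)
      also have "\<dots> = cmat ((1/r)^k *\<^sub>R mpow E k)" by (simp only: mpow_scaleR)
      finally show ?thesis by (simp add: cmat_def)
    qed
    ultimately have "norm (complex_of_real ((1/r)^k * mpow E k $ i $ j)) \<le> c" by metis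
    hence "\<bar>(1/r)^k * mpow E k $ i $ j\<bar> \<le> c" by (simp only: norm_of_real)
    hence "(1/r)^k * \<bar>mpow E k $ i $ j\<bar> \<le> c" using r by (simp add: abs_mult)
    thus ?thesis using r by (simp add: field_simps power_divide)
  qed
  have "norm (mpowv E k x) \<le> (real CARD('n) * real CARD('n) * c) * r^k * norm x" for k x
  proof -
    have "norm (mpowv E k x) = norm (mpow E k *v x)" by (simp add: mpow_mpowv)
    also have "\<dots> \<le> onorm ((*v) (mpow E k)) * norm x"
      by (rule onorm[OF matrix_vector_mul_bounded_linear])
    also have "\<dots> \<le> (real CARD('n) * real CARD('n) * (c * r^k)) * norm x"
      by (intro mult_right_mono onorm_le_matrix_component entry) simp
    finally show ?thesis by (simp add: mult_ac)
  qed
  thus ?thesis using h r unfolding E_def by blast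
qed



lemma expv_decay:
  fixes M :: "real^'n^'n"
  assumes h: "h > 0" and r: "0 < r" "r < 1"
    and bnd: "\<And>k x. norm (mpowv (Finite_Cartesian_Product.mat 1 + h *\<^sub>R M) k x) \<le> c * r^k * norm x"
    and rr: "rr > 0"
  shows "\<exists>t\<ge>0. norm (expv M t x0) \<le> rr"
proof (rule ccontr)
  assume nc: "\<not> ?thesis"
  hence big: "norm (expv M t x0) > rr" if "t \<ge> 0" for t using that by auto
  define E where "E = Finite_Cartesian_Product.mat 1 + h *\<^sub>R M"
  define P where "P k v = mpow E k *v v" for k v
  have Pb: "norm (P k v) \<le> c * r^k * norm v" for k v
    using bnd[of k v] by (simp add: P_def mpow_mpowv E_def)
  have "(\<lambda>k. (c * r^k)^2) \<longlonglongrightarrow> (c * 0)^2"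
    using r by (intro tendsto_intros) simp
  hence lim: "(\<lambda>k. (c * r^k)^2) \<longlonglongrightarrow> 0" by simp
  have "eventually (\<lambda>k. (c * r^k)^2 < 1/2) sequentially"
    by (rule order_tendstoD(2)[OF lim]) simp
  then obtain K where K: "(c * r^K)^2 < 1/2" by (auto simp: eventually_sequentially)
  define q where "q v = (\<Sum>k<K. P k v \<bullet> P k v)" for v
  define b where "b v w = (\<Sum>k<K. P k v \<bullet> P k w)" for v w
  have q_nonneg: "q v \<ge> 0" for v unfolding q_def by (intro sum_nonneg) simp
  have PE: "P k (E *v v) = P (Suc k) v" for k v
    by (simp add: P_def mpow_Suc matrix_vector_mul_assoc)
  have P_add: "P k (v + h *\<^sub>R w) = P k v + h *\<^sub>R P k w" for k v w
    by (simp add: P_def matrix_vector_right_distrib matrix_vector_mult_scaleR)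
  have Ev: "E *v v = v + h *\<^sub>R (M *v v)" for v
    by (simp add: E_def matrix_vector_mult_add_rdistrib scaleR_matrix_vector_assoc)
  have key: "b v (M *v v) \<le> - (v \<bullet> v) / (4 * h)" for v
  proof -
    have PK: "P K v \<bullet> P K v \<le> (v \<bullet> v) / 2"
    proof -
      have n0: "0 \<le> norm (P K v)" by simp
      have "(norm (P K v))^2 \<le> (c * r^K * norm v)^2"
        by (rule power_mono[OF Pb n0])
      also have "\<dots> = (c * r^K)^2 * (norm v)^2" by (simp add: power_mult_distrib)
      also have "\<dots> \<le> 1/2 * (norm v)^2" using K by (intro mult_right_mono) simp_all
      finally show ?thesis by (simp add: power2_norm_eq_inner)
    qed
    have q1: "q (E *v v) = q v - v \<bullet> v + P K v \<bullet> P K v"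
    proof -
      define g where "g k = P k v \<bullet> P k v" for k
      have s1: "(\<Sum>k<Suc K. g k) = g 0 + (\<Sum>k<K. g (Suc k))" by (rule sum.lessThan_Suc_shift)
      have s2: "(\<Sum>k<Suc K. g k) = (\<Sum>k<K. g k) + g K" by (rule sum.lessThan_Suc)
      have "q (E *v v) = (\<Sum>k<K. g (Suc k))" by (simp add: q_def PE g_def)
      moreover have "q v = (\<Sum>k<K. g k)" by (simp add: q_def g_def)
      moreover have "g 0 = v \<bullet> v" by (simp add: g_def P_def mpow_0)
      moreover have "g K = P K v \<bullet> P K v" by (simp add: g_def)
      ultimately show ?thesis using s1 s2 by linarith
    qed
    have q2: "q (E *v v) = q v + 2 * h * b v (M *v v) + h^2 * q (M *v v)"
    proof -
      have "q (E *v v) = (\<Sum>k<K. (P k v + h *\<^sub>R P k (M *v v)) \<bullet> (P k v + h *\<^sub>R P k (M *v v)))"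
        by (simp add: q_def Ev P_add)
      also have "\<dots> = (\<Sum>k<K. P k v \<bullet> P k v + 2 * h * (P k v \<bullet> P k (M *v v)) + h^2 * (P k (M *v v) \<bullet> P k (M *v v)))"
        by (rule sum.cong) (simp_all add: inner_add_left inner_add_right inner_commute power2_eq_square algebra_simps)
      also have "\<dots> = q v + 2 * h * b v (M *v v) + h^2 * q (M *v v)"
        by (simp add: q_def b_def sum.distrib sum_distrib_left)
      finally show ?thesis .
    qed
    have "2 * h * b v (M *v v) \<le> - (v \<bullet> v) / 2"
    proof -
      have "h^2 * q (M *v v) \<ge> 0" using q_nonneg[of "M *v v"] by simp
      thus ?thesis using q1 q2 PK by linarith
    qed
    hence "b v (M *v v) \<le> - (v \<bullet> v) / 2 / (2 * h)"
      using h by (simp add: field_simps)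
    thus ?thesis by (simp add: field_simps)
  qed
  define y where "y t = expv M t x0" for t
  define f where "f = (\<lambda>t. q (y t))"
  define f' where "f' t = 2 * b (y t) (M *v y t)" for t
  have df: "(f has_real_derivative f' t) (at t)" for t
  proof -
    have dy: "(y has_vector_derivative (M *v y t)) (at t)"
      unfolding y_def by (rule expv_deriv_at)
    have dP: "((\<lambda>t. P k (y t)) has_vector_derivative P k (M *v y t)) (at t)" for k
      unfolding P_def by (rule bounded_linear.has_vector_derivative[OF matrix_vector_mul_bounded_linear dy])
    have "((\<lambda>t. \<Sum>k<K. P k (y t) \<bullet> P k (y t)) has_vector_derivative
           (\<Sum>k<K. P k (y t) \<bullet> P k (M *v y t) + P k (M *v y t) \<bullet> P k (y t))) (at t)"
      by (intro has_vector_derivative_sum bounded_bilinear.has_vector_derivative[OF bounded_bilinear_inner] dP)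
    moreover have "(\<Sum>k<K. P k (y t) \<bullet> P k (M *v y t) + P k (M *v y t) \<bullet> P k (y t)) = f' t"
      by (simp add: f'_def b_def inner_commute sum.distrib sum_distrib_left)
    ultimately show ?thesis
      by (simp add: f_def q_def has_real_derivative_iff_has_vector_derivative)
  qed
  define T where "T = 2 * h * f 0 / rr^2 + 1"
  have T: "T > 0"
  proof -
    have "2 * h * f 0 / rr^2 \<ge> 0" using h rr q_nonneg[of "y 0"] by (simp add: f_def)
    thus ?thesis by (simp add: T_def)
  qed
  define g where "g t = f t + t * rr^2 / (2 * h)" for t
  have dg: "(g has_real_derivative (f' t + rr^2 / (2*h))) (at t)" for t
    using h unfolding g_def by (auto intro!: derivative_eq_intros df)
  have "g T \<le> g 0"
  proof (rule DERIV_nonpos_imp_decreasing_open[of 0 T])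
    show "0 \<le> T" using T by simp
    show "continuous_on {0..T} g"
      using dg by (intro continuous_at_imp_continuous_on) (auto intro: DERIV_isCont)
    fix t assume t: "0 < t" "t < T"
    have "f' t \<le> - (y t \<bullet> y t) / (2 * h)"
      using key[of "y t"] by (simp add: f'_def field_simps)
    moreover have "rr^2 < y t \<bullet> y t"
    proof -
      have "rr < norm (y t)" using big[of t] t by (simp add: y_def)
      hence "rr^2 < (norm (y t))^2" using rr by (intro power_strict_mono) auto
      thus ?thesis by (simp add: power2_norm_eq_inner)
    qed
    ultimately have "f' t + rr^2 / (2*h) \<le> 0"
      using h by (simp add: field_simps)
    thus "\<exists>y. (g has_real_derivative y) (at t) \<and> y \<le> 0" using dg by blast
  qed
  hence "f T \<le> f 0 - T * rr^2 / (2 * h)" by (simp add: g_def)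
  also have "\<dots> = -(rr^2) / (2 * h)"
    using h rr by (simp add: T_def field_simps)
  also have "\<dots> < 0" using h rr by simp
  finally show False using q_nonneg[of "y T"] by (simp add: f_def)
qed




definition ctrl :: "real^'n^'n \<Rightarrow> (real^'n) set \<Rightarrow> (real \<Rightarrow> real^'n) \<Rightarrow> real^'n \<Rightarrow> bool" where
  "ctrl M V z y \<longleftrightarrow> continuous_on UNIV z \<and> (\<forall>s. z s \<in> V) \<and> (\<forall>s. s \<notin> {0<..<1} \<longrightarrow> z s = 0)
     \<and> ((\<lambda>s. expv M (-s) (z s)) has_integral y) {0..1}"

lemma expv_zero: "expv M t 0 = 0"
  using expv_scale[of M t 0 0] by simp

lemma expv_neg: "expv M t (- x) = - expv M t x"
  using expv_scale[of M t "-1" x] by simp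

lemma ctrl_zero: "subspace V \<Longrightarrow> ctrl M V (\<lambda>s. 0) 0"
  by (simp add: ctrl_def expv_zero subspace_0)

lemma ctrl_add: "subspace V \<Longrightarrow> ctrl M V z1 y1 \<Longrightarrow> ctrl M V z2 y2 \<Longrightarrow> ctrl M V (\<lambda>s. z1 s + z2 s) (y1 + y2)"
  unfolding ctrl_def
  by (auto simp: expv_add subspace_add intro!: continuous_intros has_integral_add)

lemma ctrl_scale: "subspace V \<Longrightarrow> ctrl M V z y \<Longrightarrow> ctrl M V (\<lambda>s. c *\<^sub>R z s) (c *\<^sub>R y)"
  unfolding ctrl_def
  by (auto simp: expv_scale subspace_scale intro!: continuous_intros has_integral_cmul)

lemma ctrl_sum:
  assumes V: "subspace V" and fin: "finite S" and h: "\<And>j. j \<in> S \<Longrightarrow> ctrl M V (f j) (g j)"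
  shows "ctrl M V (\<lambda>s. \<Sum>j\<in>S. f j s) (\<Sum>j\<in>S. g j)"
  using fin h
proof (induction S rule: finite_induct)
  case empty then show ?case by (simp add: ctrl_zero[OF V])
next
  case (insert a S)
  have "ctrl M V (\<lambda>s. f a s + (\<Sum>j\<in>S. f j s)) (g a + (\<Sum>j\<in>S. g j))"
    by (rule ctrl_add[OF V]) (use insert in auto)
  thus ?case using insert by simp
qed

lemma ctrl_subspace: assumes V: "subspace V" shows "subspace {y. \<exists>z. ctrl M V z y}"
  unfolding real_vector.subspace_def using ctrl_zero[OF V] ctrl_add[OF V] ctrl_scale[OF V] by blast

lemma cont_zero_on_open_deriv:
  fixes g :: "real \<Rightarrow> real"
  assumes "(g has_real_derivative d) (at s)" "s \<in> {0<..<1}" "\<And>t. t \<in> {0<..<1} \<Longrightarrow> g t = 0"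
  shows "d = 0"
proof -
  have "((\<lambda>t. 0) has_real_derivative d) (at s)"
    by (rule has_field_derivative_transform_within_open[OF assms(1), of "{0<..<1}"]) (use assms in auto)
  moreover have "((\<lambda>t. 0) has_real_derivative 0) (at s)" by simp
  ultimately show ?thesis by (rule DERIV_unique)
qed

lemma ctrl_all:
  fixes M :: "real^'n^'n"
  assumes V: "subspace V" and kc: "kalman_controllable M V"
  shows "\<exists>z. ctrl M V z y"
proof -
  define R where "R = {y. \<exists>z. ctrl M V z y}"
  have sR: "subspace R" unfolding R_def by (rule ctrl_subspace[OF V])
  have "R = UNIV"
  proof (rule ccontr)
    assume "R \<noteq> UNIV"
    moreover have "span R = R" by (rule span_eq_iff[THEN iffD2, OF sR])
    ultimately have "span R \<noteq> UNIV" by (simp only: not_False_eq_True)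
    hence "dim R < DIM(real^'n)"
      using dim_subset_UNIV[of R] dim_eq_full[of R] by linarith
    then obtain v :: "real^'n" where v: "v \<noteq> 0" and vo: "\<And>y. y \<in> span R \<Longrightarrow> Linear_Algebra.orthogonal v y"
      by (rule orthogonal_to_subspace_exists) auto
    have vR: "v \<bullet> y = 0" if "y \<in> R" for y
      using vo[OF span_base[OF that]] by (simp add: Linear_Algebra.orthogonal_def)
    define beta where "beta s = max 0 (s * (1 - s))" for s :: real
    have beta_cont: "continuous_on UNIV beta" unfolding beta_def by (intro continuous_intros)
    have beta_pos: "beta s > 0" if "s \<in> {0<..<1}" for s using that by (auto simp: beta_def)
    have beta_zero: "beta s = 0" if "s \<notin> {0<..<1}" for s
    proof -
      have "s * (1 - s) \<le> 0" using that by (auto simp: mult_le_0_iff not_less)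
      thus ?thesis by (simp add: beta_def)
    qed
    have A: "v \<bullet> expv M (-s) w = 0" if w: "w \<in> V" and s: "s \<in> {0<..<1}" for w s
    proof -
      define phi where "phi t = v \<bullet> expv M (-t) w" for t
      have phi_cont: "continuous_on UNIV phi"
        unfolding phi_def by (intro continuous_intros expv_cont_comp)
      define z where "z t = (beta t * phi t) *\<^sub>R w" for t
      have ez: "expv M (-t) (z t) = (beta t * phi t) *\<^sub>R expv M (-t) w" for t
        by (simp add: z_def expv_scale)
      have icont: "continuous_on {0..1} (\<lambda>t. expv M (-t) (z t))"
        unfolding ez by (intro continuous_intros continuous_on_subset[OF beta_cont] continuous_on_subset[OF phi_cont] expv_cont_comp) auto
      define y where "y = integral {0..1} (\<lambda>t. expv M (-t) (z t))"
      have hi: "((\<lambda>t. expv M (-t) (z t)) has_integral y) {0..1}"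
        unfolding y_def using integrable_continuous_interval[OF icont] by (rule integrable_integral)
      have "ctrl M V z y"
        unfolding ctrl_def
      proof (intro conjI allI impI hi)
        show "continuous_on UNIV z" unfolding z_def by (intro continuous_intros beta_cont phi_cont)
        show "z t \<in> V" for t unfolding z_def by (rule subspace_scale[OF V w])
        show "z t = 0" if "t \<notin> {0<..<1}" for t using beta_zero[OF that] by (simp add: z_def)
      qed
      hence "v \<bullet> y = 0" using vR by (auto simp: R_def)
      moreover have "((\<lambda>t. v \<bullet> expv M (-t) (z t)) has_integral v \<bullet> y) {0..1}"
        by (rule has_integral_linear[OF hi bounded_linear_inner_right, unfolded o_def])
      ultimately have hi0: "((\<lambda>t. beta t * (phi t)^2) has_integral 0) {0..1}"
        by (simp add: ez phi_def power2_eq_square mult_ac)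
      have c2: "continuous_on {0..1} (\<lambda>t. beta t * (phi t)^2)"
        by (intro continuous_intros continuous_on_subset[OF beta_cont] continuous_on_subset[OF phi_cont]) auto
      have "integral {0..1} (\<lambda>t. beta t * (phi t)^2) = 0" using hi0 by (rule integral_unique)
      hence "\<forall>t\<in>{0..1}. beta t * (phi t)^2 = 0"
        using integral_eq_0_iff[OF c2] by (simp add: beta_def)
      hence "beta s * (phi s)^2 = 0" using s by auto
      hence "phi s = 0" using beta_pos[OF s] by simp
      thus ?thesis by (simp add: phi_def)
    qed
    have B: "v \<bullet> expv M (-s) (mpowv M k w) = 0" if "w \<in> V" "s \<in> {0<..<1}" for k w s
      using that
    proof (induction k arbitrary: s)
      case 0 then show ?case using A by (simp add: mpowv_0)
    next
      case (Suc k)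
      define u where "u = mpowv M k w"
      have d: "((\<lambda>t. v \<bullet> expv M (-t) u) has_real_derivative (v \<bullet> (- (M *v expv M (-s) u)))) (at s)"
      proof -
        have "(((\<lambda>t. expv M t u) \<circ> uminus) has_vector_derivative (-1) *\<^sub>R (M *v expv M (-s) u)) (at s)"
          by (rule vector_diff_chain_at) (auto intro!: derivative_eq_intros expv_deriv_at)
        hence "((\<lambda>t. expv M (-t) u) has_vector_derivative - (M *v expv M (-s) u)) (at s)"
          by (simp add: o_def)
        from bounded_linear.has_vector_derivative[OF bounded_linear_inner_right this, of v]
        show ?thesis by (simp add: has_real_derivative_iff_has_vector_derivative)
      qed
      have "v \<bullet> (- (M *v expv M (-s) u)) = 0"
        by (rule cont_zero_on_open_deriv[OF d Suc.prems(2)]) (use Suc.IH Suc.prems(1) u_def in auto)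
      thus ?case by (simp add: u_def expv_M mpowv_Suc)
    qed
    have lin: "linear (\<lambda>x. v \<bullet> expv M (-(1/2)) x)"
      by (rule linearI) (simp_all add: expv_add expv_scale inner_add_right)
    have "v \<bullet> expv M (-(1/2)) x = 0" for x
    proof (rule linear_eq_0_on_span[OF lin])
      show "x \<in> span (\<Union>k\<in>{..<CARD('n)}. ((\<lambda>x. M *v x) ^^ k) ` V)"
        using kc by (simp add: kalman_controllable_def)
    next
      fix y assume "y \<in> (\<Union>k\<in>{..<CARD('n)}. ((\<lambda>x. M *v x) ^^ k) ` V)"
      then obtain k w where "w \<in> V" "y = ((\<lambda>x. M *v x) ^^ k) w" by auto
      thus "v \<bullet> expv M (-(1/2)) y = 0" using B[of w "1/2" k] by (simp add: mpowv_def)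
    qed
    from this[of "expv M (1/2) v"] have "v \<bullet> v = 0" by (simp add: expv_inv)
    with v show False by simp
  qed
  thus ?thesis unfolding R_def by auto
qed



lemma ctrl_bound:
  fixes M :: "real^'n^'n"
  assumes V: "subspace V" and kc: "kalman_controllable M V"
  shows "\<exists>C\<ge>0. \<forall>y. \<exists>z. ctrl M V z y \<and> (\<forall>s. norm (z s) \<le> C * norm y)"
proof -
  have "\<forall>j. \<exists>z B. ctrl M V z (axis j 1) \<and> B \<ge> 0 \<and> (\<forall>s. norm (z s) \<le> B)"
  proof
    fix j :: 'n
    obtain z where z: "ctrl M V z (axis j 1)" using ctrl_all[OF V kc] by blast
    have "compact (z ` {0..1})"
      using z by (intro compact_continuous_image[OF continuous_on_subset[of UNIV]]) (auto simp: ctrl_def)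
    then obtain B where B: "\<forall>x\<in>z ` {0..1}. norm x \<le> B"
      using compact_imp_bounded[of "z ` {0..1}"] unfolding bounded_iff by blast
    have "norm (z s) \<le> max B 0" for s
    proof (cases "s \<in> {0..1}")
      case True then show ?thesis using B by (force simp: le_max_iff_disj)
    next
      case False
      hence "z s = 0" using z by (auto simp: ctrl_def)
      thus ?thesis by simp
    qed
    thus "\<exists>z B. ctrl M V z (axis j 1) \<and> B \<ge> 0 \<and> (\<forall>s. norm (z s) \<le> B)"
      using z by (intro exI[of _ z] exI[of _ "max B 0"]) auto
  qed
  then obtain zf Bf where zf: "\<And>j. ctrl M V (zf j) (axis j 1)" and Bf0: "\<And>j. Bf j \<ge> 0"
    and Bf: "\<And>j s. norm (zf j s) \<le> Bf j" by metis
  define C where "C = (\<Sum>j\<in>UNIV. Bf j)"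
  show ?thesis
  proof (intro exI[of _ C] conjI allI)
    show "C \<ge> 0" by (simp add: C_def sum_nonneg Bf0)
    fix y :: "real^'n"
    define z where "z s = (\<Sum>j\<in>UNIV. (y $ j) *\<^sub>R zf j s)" for s
    have "ctrl M V (\<lambda>s. \<Sum>j\<in>UNIV. (y $ j) *\<^sub>R zf j s) (\<Sum>j\<in>UNIV. (y$j) *\<^sub>R axis j 1)"
      by (rule ctrl_sum[OF V]) (auto intro: ctrl_scale[OF V zf])
    moreover have "(\<Sum>j\<in>UNIV. (y$j) *\<^sub>R axis j 1) = y"
      using basis_expansion[of y] by (simp add: scalar_mult_eq_scaleR)
    ultimately have cz: "ctrl M V z y" by (simp add: z_def[abs_def])
    have "norm (z s) \<le> C * norm y" for s
    proof -
      have "norm (z s) \<le> (\<Sum>j\<in>UNIV. norm ((y $ j) *\<^sub>R zf j s))" unfolding z_def by (rule norm_sum)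
      also have "\<dots> \<le> (\<Sum>j\<in>UNIV. norm y * Bf j)"
      proof (rule sum_mono)
        fix j
        have "\<bar>y $ j\<bar> * norm (zf j s) \<le> norm y * Bf j"
          by (rule mult_mono[OF component_le_norm_cart Bf]) auto
        thus "norm ((y $ j) *\<^sub>R zf j s) \<le> norm y * Bf j" by simp
      qed
      also have "\<dots> = C * norm y" by (simp add: C_def sum_distrib_left mult.commute)
      finally show ?thesis .
    qed
    thus "\<exists>z. ctrl M V z y \<and> (\<forall>s. norm (z s) \<le> C * norm y)" using cz by blast
  qed
qed

definition traj :: "real^'n^'n \<Rightarrow> (real \<Rightarrow> real^'n) \<Rightarrow> real^'n \<Rightarrow> real \<Rightarrow> real^'n" where
  "traj M z x0 t = expv M t (x0 + integral {0..t} (\<lambda>s. expv M (-s) (z s)))"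

lemma traj_deriv:
  fixes M :: "real^'n^'n"
  assumes zc: "continuous_on UNIV z" and t: "t \<in> {0..T}"
  shows "(traj M z x0 has_vector_derivative (M *v traj M z x0 t + z t)) (at t within {0..T})"
proof -
  have gc: "continuous_on {0..T} (\<lambda>s. expv M (-s) (z s))"
    by (intro expv_cont_comp continuous_intros continuous_on_subset[OF zc]) auto
  have d1: "((\<lambda>u. integral {0..u} (\<lambda>s. expv M (-s) (z s))) has_vector_derivative expv M (-t) (z t)) (at t within {0..T})"
    by (rule integral_has_vector_derivative[OF gc t])
  have "((\<lambda>u. x0 + integral {0..u} (\<lambda>s. expv M (-s) (z s))) has_vector_derivative expv M (-t) (z t)) (at t within {0..T})"
    using has_vector_derivative_add[OF has_vector_derivative_const[of x0] d1] by simp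
  from expv_comp_deriv[OF this, of M]
  show ?thesis by (simp add: traj_def[abs_def] expv_inv')
qed

lemma traj_0: "traj M z x0 0 = x0"
  by (simp add: traj_def expv_0)

lemma traj_sol:
  fixes M :: "real^'n^'n"
  assumes zc: "continuous_on UNIV z" and t: "0 \<le> t"
  shows "((\<lambda>s. M *v traj M z x0 s + z s) has_integral (traj M z x0 t - x0)) {0..t}"
  using fundamental_theorem_of_calculus[OF t traj_deriv[OF zc]] by (simp add: traj_0)

lemma null_ctrl:
  fixes M :: "real^'n^'n"
  assumes V: "subspace V" and kc: "kalman_controllable M V" and eps: "eps > 0"
    and decay: "\<And>x0 rr. rr > 0 \<Longrightarrow> \<exists>t\<ge>0. norm (expv M t x0) \<le> rr"
  shows "\<exists>z T. continuous_on UNIV z \<and> (\<forall>s. z s \<in> V \<and> norm (z s) \<le> eps) \<and> T \<ge> 0 \<and> traj M z x0 T = 0"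
proof -
  obtain C where C0: "C \<ge> 0" and Cb: "\<And>y. \<exists>z. ctrl M V z y \<and> (\<forall>s. norm (z s) \<le> C * norm y)"
    using ctrl_bound[OF V kc] by blast
  have rr: "eps / (C + 1) > 0" using eps C0 by simp
  obtain tau where tau: "tau \<ge> 0" "norm (expv M tau x0) \<le> eps / (C + 1)"
    using decay[OF rr] by blast
  define y where "y = - expv M tau x0"
  obtain zl where zl: "ctrl M V zl y" and zlb: "\<And>s. norm (zl s) \<le> C * norm y"
    using Cb by blast
  have zlc: "continuous_on UNIV zl" and zlV: "\<And>s. zl s \<in> V" and zl0: "\<And>s. s \<notin> {0<..<1} \<Longrightarrow> zl s = 0"
    and zli: "((\<lambda>s. expv M (-s) (zl s)) has_integral y) {0..1}"
    using zl by (auto simp: ctrl_def)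
  define z where "z s = zl (s - tau)" for s
  have zc: "continuous_on UNIV z"
    unfolding z_def by (intro continuous_on_compose2[OF zlc] continuous_intros) auto
  have zb: "norm (z s) \<le> eps" for s
  proof -
    have "norm (z s) \<le> C * norm y" by (simp add: z_def zlb)
    also have "\<dots> \<le> C * (eps / (C + 1))"
      using tau(2) C0 by (intro mult_left_mono) (simp_all add: y_def)
    also have "\<dots> \<le> eps" using C0 eps by (simp add: field_simps)
    finally show ?thesis .
  qed
  have bl: "bounded_linear (expv M (-tau))"
    using expv_linear linear_conv_bounded_linear by blast
  have i1: "((\<lambda>u. expv M (-(u + tau)) (zl u)) has_integral (- x0)) {0..1}"
  proof -
    have "((expv M (-tau) \<circ> (\<lambda>s. expv M (-s) (zl s))) has_integral expv M (-tau) y) {0..1}"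
      by (rule has_integral_linear[OF zli bl])
    moreover have "expv M (-tau) y = - x0" by (simp add: y_def expv_neg expv_inv)
    moreover have "(expv M (-tau) \<circ> (\<lambda>s. expv M (-s) (zl s))) = (\<lambda>u. expv M (-(u + tau)) (zl u))"
      by (simp add: fun_eq_iff o_def expv_add_time[symmetric] add.commute)
    ultimately show ?thesis by simp
  qed
  have i2: "((\<lambda>s. expv M (-s) (z s)) has_integral (- x0)) {tau..tau+1}"
  proof -
    have "((\<lambda>x. expv M (-((x + - tau) + tau)) (zl (x + - tau))) has_integral (- x0)) {0 - - tau..1 - - tau}"
      by (rule has_integral_shift_real_ivl[OF i1])
    thus ?thesis by (simp add: z_def add.commute)
  qed
  have i0: "((\<lambda>s. expv M (-s) (z s)) has_integral 0) {0..tau}"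
  proof -
    have "((\<lambda>s. 0::real^'n) has_integral 0) {0..tau}" by simp
    thus ?thesis
      by (rule has_integral_eq[rotated]) (auto simp: z_def zl0 expv_zero)
  qed
  have "((\<lambda>s. expv M (-s) (z s)) has_integral (0 + - x0)) {0..tau+1}"
    by (rule has_integral_combine[OF tau(1) _ i0 i2]) simp
  hence "integral {0..tau+1} (\<lambda>s. expv M (-s) (z s)) = - x0" by (simp add: integral_unique)
  hence "traj M z x0 (tau + 1) = 0" by (simp add: traj_def expv_zero)
  moreover have "z s \<in> V" for s by (simp add: z_def zlV)
  ultimately show ?thesis using zc zb tau(1)
    by (intro exI[of _ z] exI[of _ "tau + 1"]) auto
qed

lemma sol_unique:
  fixes M :: "real^'n^'n" and g x y :: "real \<Rightarrow> real^'n"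
  assumes hx: "\<And>t. t \<ge> 0 \<Longrightarrow> ((\<lambda>s. M *v x s + g s) has_integral (x t - x0)) {0..t}"
    and hy: "\<And>t. t \<ge> 0 \<Longrightarrow> ((\<lambda>s. M *v y s + g s) has_integral (y t - x0)) {0..t}"
    and T: "T \<ge> 0"
  shows "y T = x T"
proof -
  define e where "e t = y t - x t" for t
  have he: "((\<lambda>s. M *v e s) has_integral e t) {0..t}" if "t \<ge> 0" for t
  proof -
    have "((\<lambda>s. (M *v y s + g s) - (M *v x s + g s)) has_integral ((y t - x0) - (x t - x0))) {0..t}"
      by (rule has_integral_diff[OF hy[OF that] hx[OF that]])
    thus ?thesis by (simp add: e_def matrix_vector_mult_diff_distrib)
  qed
  have e0: "e 0 = 0"
  proof -
    have "((\<lambda>s. M *v e s) has_integral e 0) {0}" using he[of 0] by simp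
    moreover have "((\<lambda>s. M *v e s) has_integral 0) {0}" by (rule has_integral_refl(2))
    ultimately show ?thesis by (rule has_integral_unique)
  qed
  have int: "(\<lambda>s. M *v e s) integrable_on {0..T}" using he[OF T] by blast
  have eint: "e t = integral {0..t} (\<lambda>s. M *v e s)" if "t \<in> {0..T}" for t
    using he[of t] that by (simp add: integral_unique)
  have econt: "continuous_on {0..T} e"
  proof -
    have "continuous_on {0..T} (\<lambda>t. integral {0..t} (\<lambda>s. M *v e s))"
      by (rule indefinite_integral_continuous_1[OF int])
    thus ?thesis by (rule continuous_on_eq) (simp add: eint)
  qed
  have Mcont: "continuous_on {0..T} (\<lambda>s. M *v e s)"
    by (rule continuous_on_compose2[OF bounded_linear.continuous_on[OF matrix_vector_mul_bounded_linear continuous_on_id] econt]) auto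
  have de: "(e has_vector_derivative (M *v e t)) (at t within {0..T})" if t: "t \<in> {0..T}" for t
  proof -
    have "((\<lambda>u. integral {0..u} (\<lambda>s. M *v e s)) has_vector_derivative M *v e t) (at t within {0..T})"
      by (rule integral_has_vector_derivative[OF Mcont t])
    thus ?thesis
      by (rule has_vector_derivative_transform_within[of _ _ _ _ 1]) (use t eint in auto)
  qed
  have "e T = 0" by (rule unique_fwd[where T=T and M=M and y=e, OF T de e0])
  thus ?thesis by (simp add: e_def)
qed


lemma mv_neg_arg: "M *v (- x) = - (M *v (x::'a::ring_1^'m))"
  using matrix_vector_mult_diff_distrib[of M 0 x] by simp


lemma minkZ_convex:
  fixes B C :: "real^'m^'n" and U W :: "(real^'m) set"
  assumes U: "convex U"
  shows "convex (minkowski_Z B C U W)"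
proof (rule convexI)
  fix z1 z2 and a b :: real
  assume z1: "z1 \<in> minkowski_Z B C U W" and z2: "z2 \<in> minkowski_Z B C U W"
    and a: "0 \<le> a" and b: "0 \<le> b" and ab: "a + b = 1"
  show "a *\<^sub>R z1 + b *\<^sub>R z2 \<in> minkowski_Z B C U W"
    unfolding minkowski_Z_def
  proof (intro CollectI ballI)
    fix w assume w: "w \<in> W"
    obtain u1 where u1: "u1 \<in> U" "z1 - C *v w = B *v u1" using z1 w by (auto simp: minkowski_Z_def)
    obtain u2 where u2: "u2 \<in> U" "z2 - C *v w = B *v u2" using z2 w by (auto simp: minkowski_Z_def)
    have "a *\<^sub>R (z1 - C *v w) + b *\<^sub>R (z2 - C *v w) = a *\<^sub>R z1 + b *\<^sub>R z2 - (a + b) *\<^sub>R (C *v w)"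
      by (simp add: scaleR_diff_right scaleR_add_left)
    hence "a *\<^sub>R z1 + b *\<^sub>R z2 - C *v w = a *\<^sub>R (z1 - C *v w) + b *\<^sub>R (z2 - C *v w)"
      using ab by simp
    also have "\<dots> = B *v (a *\<^sub>R u1 + b *\<^sub>R u2)"
      by (simp add: u1 u2 matrix_vector_right_distrib matrix_vector_mult_scaleR)
    finally show "a *\<^sub>R z1 + b *\<^sub>R z2 - C *v w \<in> (\<lambda>u. B *v u) ` U"
      using convexD[OF U u1(1) u2(1) a b ab] by blast
  qed
qed


lemma minkZ_neg:
  fixes B C :: "real^'m^'n" and U W :: "(real^'m) set" and z :: "real^'n"
  assumes U: "\<And>u. u \<in> U \<Longrightarrow> -u \<in> U" and W: "\<And>w. w \<in> W \<Longrightarrow> -w \<in> W"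
    and z: "z \<in> minkowski_Z B C U W"
  shows "-z \<in> minkowski_Z B C U W"
  unfolding minkowski_Z_def
proof (intro CollectI ballI)
  fix w assume w: "w \<in> W"
  obtain u where u: "u \<in> U" "z - C *v (-w) = B *v u" using z W[OF w] by (auto simp: minkowski_Z_def)
  have "-z - C *v w = B *v (-u)"
    using u(2) by (simp add: matrix_vector_mult_diff_distrib algebra_simps mv_neg_arg)
  thus "-z - C *v w \<in> (\<lambda>u. B *v u) ` U" using U[OF u(1)] by blast
qed


lemma sym_ball:
  fixes Z :: "(real^'n) set"
  assumes cZ: "convex Z" and sZ: "\<And>z. z \<in> Z \<Longrightarrow> -z \<in> Z" and ne: "Z \<noteq> {}"
  shows "0 \<in> Z \<and> (\<exists>e>0. \<forall>v\<in>span Z. norm v \<le> e \<longrightarrow> v \<in> Z)"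
proof -
  from ne obtain z0 where z0: "z0 \<in> Z" by auto
  have "(1/2::real) *\<^sub>R z0 + (1/2::real) *\<^sub>R (-z0) \<in> Z"
    by (rule convexD[OF cZ z0 sZ[OF z0]]) auto
  hence Z0: "0 \<in> Z" by simp
  have aff: "affine hull Z = span Z"
    by (rule affine_hull_span_0) (rule hull_inc[OF Z0])
  have "rel_interior Z \<noteq> {}" using rel_interior_eq_empty[OF cZ] ne by simp
  then obtain p where p: "p \<in> rel_interior Z" by auto
  then obtain e where e: "e > 0" "ball p e \<inter> span Z \<subseteq> Z" and pZ: "p \<in> Z"
    unfolding mem_rel_interior_ball aff by auto
  have mp: "-p \<in> rel_interior Z"
    unfolding mem_rel_interior_ball aff
  proof (intro conjI exI[of _ e])
    show "-p \<in> Z" by (rule sZ[OF pZ])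
    show "e > 0" by (rule e(1))
    show "ball (-p) e \<inter> span Z \<subseteq> Z"
    proof
      fix x assume x: "x \<in> ball (-p) e \<inter> span Z"
      have "-x \<in> ball p e" using x by (simp add: dist_norm norm_minus_commute add.commute)
      moreover have "-x \<in> span Z" using x span_neg by blast
      ultimately have "-x \<in> Z" using e(2) by blast
      from sZ[OF this] show "x \<in> Z" by simp
    qed
  qed
  have "(1/2::real) *\<^sub>R p + (1/2::real) *\<^sub>R (-p) \<in> rel_interior Z"
    by (rule convexD[OF convex_rel_interior[OF cZ] p mp]) auto
  hence "0 \<in> rel_interior Z" by simp
  then obtain e0 where e0: "e0 > 0" "ball 0 e0 \<inter> span Z \<subseteq> Z"
    unfolding mem_rel_interior_ball aff by auto
  have "\<forall>v\<in>span Z. norm v \<le> e0/2 \<longrightarrow> v \<in> Z"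
  proof (intro ballI impI)
    fix v assume "v \<in> span Z" "norm v \<le> e0/2"
    hence "v \<in> ball 0 e0 \<inter> span Z" using e0(1) by auto
    thus "v \<in> Z" using e0(2) by blast
  qed
  thus ?thesis using Z0 e0(1) by (intro conjI exI[of _ "e0/2"]) auto
qed


lemma mat_norm_add_id:
  fixes D :: "real^'n^'n"
  shows "mat_norm (D + s *\<^sub>R Finite_Cartesian_Product.mat 1) \<le> mat_norm D + \<bar>s\<bar>"
proof -
  have eq: "(\<lambda>x. (D + s *\<^sub>R Finite_Cartesian_Product.mat 1) *v x) = (\<lambda>x. D *v x + s *\<^sub>R x)"
    by (simp add: fun_eq_iff matrix_vector_mult_add_rdistrib scaleR_matrix_vector_assoc[symmetric])
  have "onorm (\<lambda>x. D *v x + s *\<^sub>R x) \<le> onorm (\<lambda>x. D *v x) + onorm (\<lambda>x::real^'n. s *\<^sub>R x)"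
    by (rule onorm_triangle) (auto intro: bounded_linear_scaleR_right)
  also have "onorm (\<lambda>x::real^'n. s *\<^sub>R x) = \<bar>s\<bar>"
  proof -
    have "onorm (\<lambda>x::real^'n. s *\<^sub>R x) = \<bar>s\<bar> * onorm (\<lambda>x::real^'n. x)"
      by (rule onorm_scaleR[OF bounded_linear_ident])
    also have "onorm (\<lambda>x::real^'n. x) = 1" by (rule onorm_id)
    finally show ?thesis by simp
  qed
  finally show ?thesis unfolding mat_norm_def eq by simp
qed


lemma cmat_add_id:
  fixes X :: "real^'n^'n"
  shows "cmat (X + s *\<^sub>R Finite_Cartesian_Product.mat 1) *v u = cmat X *v u + (\<chi> i. complex_of_real s * u $ i)"
proof -
  have "(cmat (X + s *\<^sub>R Finite_Cartesian_Product.mat 1) *v u) $ i = (cmat X *v u + (\<chi> i. complex_of_real s * u $ i)) $ i" for i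
  proof -
    have "(cmat (X + s *\<^sub>R Finite_Cartesian_Product.mat 1) *v u) $ i
        = (\<Sum>j\<in>UNIV. cmat (X + s *\<^sub>R Finite_Cartesian_Product.mat 1) $ i $ j * u $ j)"
      by (simp add: matrix_vector_mult_def)
    also have "\<dots> = (\<Sum>j\<in>UNIV. complex_of_real (X $ i $ j) * u $ j + (if j = i then complex_of_real s * u $ j else 0))"
      by (rule sum.cong) (auto simp: cmat_def Finite_Cartesian_Product.mat_def distrib_right)
    also have "\<dots> = (cmat X *v u) $ i + complex_of_real s * u $ i"
      by (simp add: sum.distrib cmat_def matrix_vector_mult_def)
    finally show ?thesis by simp
  qed
  thus ?thesis by (simp add: Finite_Cartesian_Product.vec_eq_iff)
qed




lemma box_convex: "convex {u :: real^'m. \<forall>j. (j \<notin> L \<longrightarrow> \<bar>u $ j\<bar> \<le> 1) \<and> (j \<in> L \<longrightarrow> u $ j = 0)}"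
proof (rule convexI)
  fix x y :: "real^'m" and a b :: real
  assume x: "x \<in> {u :: real^'m. \<forall>j. (j \<notin> L \<longrightarrow> \<bar>u $ j\<bar> \<le> 1) \<and> (j \<in> L \<longrightarrow> u $ j = 0)}"
    and y: "y \<in> {u :: real^'m. \<forall>j. (j \<notin> L \<longrightarrow> \<bar>u $ j\<bar> \<le> 1) \<and> (j \<in> L \<longrightarrow> u $ j = 0)}"
    and a: "0 \<le> a" and b: "0 \<le> b" and ab: "a + b = 1"
  show "a *\<^sub>R x + b *\<^sub>R y \<in> {u :: real^'m. \<forall>j. (j \<notin> L \<longrightarrow> \<bar>u $ j\<bar> \<le> 1) \<and> (j \<in> L \<longrightarrow> u $ j = 0)}"
  proof (intro CollectI allI conjI impI)
    fix j assume j: "j \<notin> L"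
    have "\<bar>a * x $ j + b * y $ j\<bar> \<le> a * \<bar>x $ j\<bar> + b * \<bar>y $ j\<bar>"
      using a b by (metis abs_mult abs_of_nonneg abs_triangle_ineq)
    also have "\<dots> \<le> a * 1 + b * 1"
      using x y j a b by (intro add_mono mult_left_mono) auto
    finally show "\<bar>(a *\<^sub>R x + b *\<^sub>R y) $ j\<bar> \<le> 1" using ab by simp
  next
    fix j assume "j \<in> L"
    thus "(a *\<^sub>R x + b *\<^sub>R y) $ j = 0" using x y by simp
  qed
qed

lemma iter_zero:
  fixes M :: "real^'n^'n"
  shows "((\<lambda>x. M *v x) ^^ k) 0 = 0"
  by (induction k) auto

theorem proposition6:
  fixes N :: nat
    and sub :: "'n::finite \<Rightarrow> nat"
    and act :: "'m::finite \<Rightarrow> nat"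
    and Nbr :: "nat \<Rightarrow> nat set"
    and A D :: "real^'n^'n"
    and Bbar :: "real^'m^'n"
    and L :: "'m set"
  assumes sub_range: "\<And>i. sub i \<in> {1..N}"
    and sub_nonempty: "\<And>k. k \<in> {1..N} \<Longrightarrow> \<exists>i. sub i = k"
    and act_range: "\<And>j. act j \<in> {1..N}"
    and Nbr_range: "\<And>k. k \<in> {1..N} \<Longrightarrow> Nbr k \<subseteq> {1..N} - {k}"
    and A_blockdiag: "\<And>i j. sub i \<noteq> sub j \<Longrightarrow> A $ i $ j = 0"
    and D_struct: "\<And>i j. D $ i $ j \<noteq> 0 \<Longrightarrow> sub j \<in> Nbr (sub i)"
    and D_nonzero: "D \<noteq> 0"
    and Bbar_blockdiag: "\<And>i j. sub i \<noteq> act j \<Longrightarrow> Bbar $ i $ j = 0"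
    and L_nonempty: "L \<noteq> {}"
    and L_sub: "L \<subseteq> {j. act j = N}"
  defines "B \<equiv> (\<chi> i j. if j \<in> L then 0 else Bbar $ i $ j)"
    and "C \<equiv> (\<chi> i j. if j \<in> L then Bbar $ i $ j else 0)"
    and "U \<equiv> {u :: real^'m. \<forall>j. (j \<notin> L \<longrightarrow> \<bar>u $ j\<bar> \<le> 1) \<and> (j \<in> L \<longrightarrow> u $ j = 0)}"
    and "W \<equiv> {w :: real^'m. \<forall>j. (j \<in> L \<longrightarrow> \<bar>w $ j\<bar> \<le> 1) \<and> (j \<notin> L \<longrightarrow> w $ j = 0)}"
  assumes norm_small: "ereal (mat_norm D) < min (r_R A) (mu_Z A (span (minkowski_Z B C U W)))"
    and no_eigvec: "\<not> (\<exists>v :: real^'n. \<exists>l::real. v \<noteq> 0 \<and> transpose (A + D) *v v = l *\<^sub>R v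
                          \<and> (\<forall>z\<in>minkowski_Z B C U W. v \<bullet> z \<le> 0))"
  shows "resiliently_stabilizable (A + D) B C U W"
proof -
  define Z where "Z = minkowski_Z B C U W"
  define V where "V = span Z"
  have ns1: "ereal (mat_norm D) < r_R A" and ns2: "ereal (mat_norm D) < mu_Z A V"
    using norm_small by (simp_all add: Z_def V_def)
  have kc: "kalman_controllable (A + D) V"
  proof (rule ccontr)
    assume nk: "\<not> kalman_controllable (A + D) V"
    have "mu_Z A V \<le> ereal (mat_norm D)"
      unfolding mu_Z_def by (rule Inf_lower) (use nk in auto)
    with ns2 show False by simp
  qed
  have Zne: "Z \<noteq> {}"
  proof
    assume "Z = {}"
    hence V0: "V = {0}" by (simp add: V_def)
    have "(\<Union>k\<in>{..<CARD('n)}. ((\<lambda>x. (A + D) *v x) ^^ k) ` V) \<subseteq> {0}"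
      using V0 iter_zero by auto
    hence "span (\<Union>k\<in>{..<CARD('n)}. ((\<lambda>x. (A + D) *v x) ^^ k) ` V) \<subseteq> span {0}"
      by (rule span_mono)
    hence "(UNIV :: (real^'n) set) \<subseteq> {0}" using kc by (simp add: kalman_controllable_def)
    moreover have "axis (undefined::'n) (1::real) \<noteq> 0" by (simp add: axis_eq_0_iff)
    ultimately show False by blast
  qed
  have Uc: "convex U" unfolding U_def by (rule box_convex)
  have Us: "\<And>u. u \<in> U \<Longrightarrow> -u \<in> U" by (auto simp: U_def)
  have Ws: "\<And>w. w \<in> W \<Longrightarrow> -w \<in> W" by (auto simp: W_def)
  have Zc: "convex Z" unfolding Z_def by (rule minkZ_convex[OF Uc])
  have Zs: "\<And>z. z \<in> Z \<Longrightarrow> -z \<in> Z" unfolding Z_def by (rule minkZ_neg[OF Us Ws])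
  obtain eps where eps: "eps > 0" and ball: "\<And>v. v \<in> V \<Longrightarrow> norm v \<le> eps \<Longrightarrow> v \<in> Z"
    using sym_ball[OF Zc Zs Zne] unfolding V_def by blast
  obtain s where s1: "mat_norm D < s" and s2: "ereal s < r_R A"
    using ereal_dense2[OF ns1] by auto
  define sg where "sg = s - mat_norm D"
  have sg: "sg > 0" using s1 by (simp add: sg_def)
  have eig: "Re lam \<le> - sg" if u: "u \<noteq> 0" and ev: "cmat (A + D) *v u = (\<chi> i. lam * u $ i)" for lam u
  proof (rule ccontr)
    assume "\<not> Re lam \<le> - sg"
    hence re: "Re (lam + complex_of_real sg) > 0" by simp
    define D' where "D' = D + sg *\<^sub>R Finite_Cartesian_Product.mat 1"
    have "cmat (A + D') *v u = cmat (A + D) *v u + (\<chi> i. complex_of_real sg * u $ i)"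
      unfolding D'_def using cmat_add_id[of "A + D" sg u] by (simp add: add.assoc)
    also have "\<dots> = (\<chi> i. (lam + complex_of_real sg) * u $ i)"
      by (simp add: ev Finite_Cartesian_Product.vec_eq_iff distrib_right)
    finally have ev': "cmat (A + D') *v u = (\<chi> i. (lam + complex_of_real sg) * u $ i)" .
    have "r_R A \<le> ereal (mat_norm D')"
      unfolding r_R_def by (rule Inf_lower) (use u ev' re in blast)
    also have "mat_norm D' \<le> mat_norm D + sg"
      using mat_norm_add_id[of D sg] sg by (simp add: D'_def)
    hence "ereal (mat_norm D') \<le> ereal s" by (simp add: sg_def)
    finally show False using s2 by simp
  qed
  obtain h where h: "h > 0" and hb: "\<exists>c r. 0 < r \<and> r < 1 \<and>
      (\<forall>k x. norm (mpowv (Finite_Cartesian_Product.mat 1 + h *\<^sub>R (A + D)) k x) \<le> c * r^k * norm x)"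
  proof -
    have "\<exists>h>0. \<exists>c r. 0 < r \<and> r < 1 \<and>
      (\<forall>k x. norm (mpowv (Finite_Cartesian_Product.mat 1 + h *\<^sub>R (A + D)) k x) \<le> c * r^k * norm x)"
      by (rule spectral_decay[OF sg]) (rule eig)
    thus ?thesis using that by blast
  qed
  then obtain c r where r: "0 < r" "r < 1"
    and bnd: "\<And>k x. norm (mpowv (Finite_Cartesian_Product.mat 1 + h *\<^sub>R (A + D)) k x) \<le> c * r^k * norm x"
    by blast
  have decay: "\<exists>t\<ge>0. norm (expv (A + D) t x0) \<le> rr" if "rr > 0" for x0 rr
    by (rule expv_decay[OF h r bnd that])
  have sV: "subspace V" by (simp add: V_def)
  show ?thesis
    unfolding resiliently_stabilizable_def
  proof (intro allI)
    fix x0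
    obtain z T where zc: "continuous_on UNIV z" and zV: "\<forall>s. z s \<in> V \<and> norm (z s) \<le> eps"
      and T: "T \<ge> 0" and xT: "traj (A + D) z x0 T = 0"
      using null_ctrl[OF sV kc eps decay] by blast
    have zZ: "z t \<in> Z" for t using zV ball by blast
    define f where "f t w = (SOME u. u \<in> U \<and> B *v u = z t - C *v w)" for t w
    have fp: "f t w \<in> U \<and> B *v f t w = z t - C *v w" if "w \<in> W" for t w
    proof -
      have "z t - C *v w \<in> (\<lambda>u. B *v u) ` U" using zZ[of t] that by (simp add: Z_def minkowski_Z_def)
      hence "\<exists>u. u \<in> U \<and> B *v u = z t - C *v w" by auto
      thus ?thesis unfolding f_def by (rule someI_ex)
    qed
    have part2: "\<exists>T\<ge>0. \<exists>x. is_solution (A + D) B C (\<lambda>t. f t (w t)) w x0 x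
               \<and> (\<forall>y. is_solution (A + D) B C (\<lambda>t. f t (w t)) w x0 y \<longrightarrow> (\<forall>t\<ge>0. y t = x t))
               \<and> x T = 0" if hw: "\<forall>t\<ge>0. w t \<in> W" for w
    proof -
      define x where "x = traj (A + D) z x0"
      define g where "g s = B *v f s (w s) + C *v w s" for s
      have gz: "g s = z s" if "s \<ge> 0" for s
        using fp[OF hw[rule_format, OF that], of s] by (simp add: g_def)
      have solx: "is_solution (A + D) B C (\<lambda>t. f t (w t)) w x0 x"
        unfolding is_solution_def
      proof (intro allI impI)
        fix t :: real assume t: "t \<ge> 0"
        have "((\<lambda>s. (A + D) *v x s + z s) has_integral (x t - x0)) {0..t}"
          unfolding x_def by (rule traj_sol[OF zc t])
        thus "((\<lambda>s. (A + D) *v x s + B *v f s (w s) + C *v w s) has_integral (x t - x0)) {0..t}"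
          by (rule has_integral_eq[rotated]) (simp add: gz[symmetric] g_def add.assoc)
      qed
      have hx: "((\<lambda>s. (A + D) *v x s + g s) has_integral (x t - x0)) {0..t}" if "t \<ge> 0" for t
        using solx that unfolding is_solution_def by (simp add: g_def add.assoc)
      have uniq: "\<forall>t\<ge>0. y t = x t" if "is_solution (A + D) B C (\<lambda>t. f t (w t)) w x0 y" for y
      proof (intro allI impI)
        fix t :: real assume t: "t \<ge> 0"
        have hy: "((\<lambda>s. (A + D) *v y s + g s) has_integral (y t' - x0)) {0..t'}" if "t' \<ge> 0" for t'
          using \<open>is_solution (A + D) B C (\<lambda>t. f t (w t)) w x0 y\<close> that
          unfolding is_solution_def by (simp add: g_def add.assoc)
        show "y t = x t" by (rule sol_unique[OF hx hy t])
      qed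
      show ?thesis using T solx uniq xT unfolding x_def by blast
    qed
    have part1: "\<forall>t\<ge>0. \<forall>w\<in>W. f t w \<in> U" using fp by blast
    show "\<exists>f :: real \<Rightarrow> real^'m \<Rightarrow> real^'m. (\<forall>t\<ge>0. \<forall>w\<in>W. f t w \<in> U) \<and>
        (\<forall>w. (\<forall>t\<ge>0. w t \<in> W) \<longrightarrow>
           (\<exists>T\<ge>0. \<exists>x. is_solution (A + D) B C (\<lambda>t. f t (w t)) w x0 x
               \<and> (\<forall>y. is_solution (A + D) B C (\<lambda>t. f t (w t)) w x0 y \<longrightarrow> (\<forall>t\<ge>0. y t = x t))
               \<and> x T = 0))"
      using part1 part2 by blast
  qed
qed

end
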